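(* Let $l$ and $m$ be positive integers, let $n=2^m-1$, let $\pi : (\mathbb Z_2^m)^* \to \mathbb Z_{n}$ be a bijection, let $q\equiv 1\pmod{2n}$ be a prime power, let $\rho$ be a primitive element of $\mathbb F_q$, and let $\Gamma = \operatorname{Cay}(G_{l,m,q},S(\pi))$. Let $g\in(\mathbb Z_2^m)^*$ with $\pi(g)\neq 1$, and let $v=(0,0,0)$ and $w=(0,g,\rho)$ be vertices of $\Gamma$. Then the number of common neighbours of $v$ and $w$ is $$2 + \sum_{\substack{h \in (\mathbb Z_2^m)^* \\ h \ne g}} c^{n}_q\big(\pi(h)-1,\ \pi(h+g)-1\big).$$
   Context: For an additive group $A$, $A^*=A\setminus\{0\}$. $G_{l,m,q} = \mathbb Z_l \oplus \mathbb Z_2^m \oplus \mathbb F_q$. $S_0 = \{(g,0) : g \in (\mathbb Z_l \oplus \mathbb Z_2^m)^*\}$; $S_{z,\pi} = \{(0,z,\rho^j) : j\in\mathbb Z,\ j \equiv \pi(z) \pmod{n}\}$ for $z\in(\mathbb Z_2^m)^*$; $S(\pi) = S_0 \cup \bigcup_z S_{z,\pi}$. $\operatorname{Cay}(G_{l,m,q},S(\pi))$ has vertex set $G_{l,m,q}$, $x\sim y$ iff $y-x\in S(\pi)$. Write $q=2nr+1$; for $i\in\mathbb Z_n$, $C^n_q(i) = \{\rho^{nj+i} : 0\le j\le 2r-1\}$; for $a,b\in\mathbb Z_n$, $c^n_q(a,b) = |(C^n_q(a)+1)\cap C^n_q(b)|$ (indices in $\mathbb Z_n$). *)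

theory Defs
  imports "HOL-Number_Theory.Cong"
begin

text \<open>Z_2^m: functions nat => bool vanishing outside {..<m}; addition is pointwise xor.\<close>
definition Z2m :: "nat \<Rightarrow> (nat \<Rightarrow> bool) set" where
  "Z2m m = {z. \<forall>i\<ge>m. \<not> z i}"

definition z2zero :: "nat \<Rightarrow> bool" where
  "z2zero = (\<lambda>_. False)"

definition z2add :: "(nat \<Rightarrow> bool) \<Rightarrow> (nat \<Rightarrow> bool) \<Rightarrow> (nat \<Rightarrow> bool)" where
  "z2add z y = (\<lambda>i. z i \<noteq> y i)"

text \<open>The group G_{l,m,q} = Z_l + Z_2^m + F_q, elements as triples; Z_l as residues {0..<l}.\<close>
definition Gset :: "nat \<Rightarrow> nat \<Rightarrow> (int \<times> (nat \<Rightarrow> bool) \<times> 'f::field) set" where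
  "Gset l m = {(a, z, x). 0 \<le> a \<and> a < int l \<and> z \<in> Z2m m}"

definition gsub :: "nat \<Rightarrow> (int \<times> (nat \<Rightarrow> bool) \<times> 'f::field) \<Rightarrow> (int \<times> (nat \<Rightarrow> bool) \<times> 'f) \<Rightarrow> (int \<times> (nat \<Rightarrow> bool) \<times> 'f)" where
  "gsub l u v = ((fst u - fst v) mod int l, z2add (fst (snd u)) (fst (snd v)), snd (snd u) - snd (snd v))"

definition primitive_element :: "'f::field \<Rightarrow> bool" where
  "primitive_element \<rho> \<longleftrightarrow> \<rho> \<noteq> 0 \<and> (\<forall>x. x \<noteq> 0 \<longrightarrow> (\<exists>k::nat. x = \<rho> ^ k))"

definition S0 :: "nat \<Rightarrow> nat \<Rightarrow> (int \<times> (nat \<Rightarrow> bool) \<times> 'f::field) set" where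
  "S0 l m = {(a, z, 0) | a z. 0 \<le> a \<and> a < int l \<and> z \<in> Z2m m \<and> (a, z) \<noteq> (0, z2zero)}"

definition Szpi :: "nat \<Rightarrow> ((nat \<Rightarrow> bool) \<Rightarrow> nat) \<Rightarrow> 'f::field \<Rightarrow> (nat \<Rightarrow> bool) \<Rightarrow> (int \<times> (nat \<Rightarrow> bool) \<times> 'f) set" where
  "Szpi n \<pi> \<rho> z = {(0, z, \<rho> powi j) | j::int. [j = int (\<pi> z)] (mod int n)}"

definition Spi :: "nat \<Rightarrow> nat \<Rightarrow> nat \<Rightarrow> ((nat \<Rightarrow> bool) \<Rightarrow> nat) \<Rightarrow> 'f::field \<Rightarrow> (int \<times> (nat \<Rightarrow> bool) \<times> 'f) set" where
  "Spi l m n \<pi> \<rho> = S0 l m \<union> (\<Union>z \<in> Z2m m - {z2zero}. Szpi n \<pi> \<rho> z)"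

definition cay_adj :: "nat \<Rightarrow> nat \<Rightarrow> (int \<times> (nat \<Rightarrow> bool) \<times> 'f::field) set \<Rightarrow> (int \<times> (nat \<Rightarrow> bool) \<times> 'f) \<Rightarrow> (int \<times> (nat \<Rightarrow> bool) \<times> 'f) \<Rightarrow> bool" where
  "cay_adj l m S x y \<longleftrightarrow> x \<in> Gset l m \<and> y \<in> Gset l m \<and> gsub l y x \<in> S"

definition common_neighbours :: "nat \<Rightarrow> nat \<Rightarrow> (int \<times> (nat \<Rightarrow> bool) \<times> 'f::field) set \<Rightarrow> (int \<times> (nat \<Rightarrow> bool) \<times> 'f) \<Rightarrow> (int \<times> (nat \<Rightarrow> bool) \<times> 'f) \<Rightarrow> (int \<times> (nat \<Rightarrow> bool) \<times> 'f) set" where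
  "common_neighbours l m S v w = {u \<in> Gset l m. cay_adj l m S v u \<and> cay_adj l m S w u}"

text \<open>Cyclotomic classes of order n over F_q, q = card (UNIV :: 'f set) = 2nr+1, and cyclotomic numbers.\<close>
definition cyc_class :: "nat \<Rightarrow> 'f::{field,finite} \<Rightarrow> nat \<Rightarrow> 'f set" where
  "cyc_class n \<rho> i = {\<rho> ^ (n * j + i) | j. j < 2 * ((card (UNIV :: 'f set) - 1) div (2 * n))}"

definition cyc_num :: "nat \<Rightarrow> 'f::{field,finite} \<Rightarrow> nat \<Rightarrow> nat \<Rightarrow> nat" where
  "cyc_num n \<rho> a b = card ((\<lambda>x. x + 1) ` cyc_class n \<rho> (a mod n) \<inter> cyc_class n \<rho> (b mod n))"

end

theory Submission
  imports Defs
begin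

lemma pow_card_minus1:
  fixes x :: "'f::{field,finite}"
  assumes "x \<noteq> 0" shows "x ^ (card (UNIV :: 'f set) - 1) = 1"
proof -
  have c: "card (UNIV - {0::'f}) = card (UNIV :: 'f set) - 1" by (simp add: card_Diff_subset)
  have "(\<Prod>y\<in>UNIV-{0::'f}. x * y) = x ^ (card (UNIV :: 'f set) - 1) * \<Prod>(UNIV-{0::'f})"
    by (simp add: prod.distrib c)
  moreover have "(\<Prod>y\<in>UNIV-{0::'f}. x * y) = (\<Prod>y\<in>UNIV-{0}. y)"
    by (rule prod.reindex_bij_witness[of _ "\<lambda>y. y / x" "\<lambda>y. x * y"]) (use assms in auto)
  moreover have "\<Prod>(UNIV-{0::'f}) \<noteq> 0" by simp
  ultimately show ?thesis by simp
qed

lemma card_ge2: "card (UNIV :: 'f::{field,finite} set) \<ge> 2"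
proof -
  have "card {0::'f, 1} \<le> card (UNIV :: 'f set)" by (rule card_mono) auto
  thus ?thesis by simp
qed

locale cyc =
  fixes \<rho> :: "'f::{field,finite}" and n :: nat and N :: nat
  assumes prim: "primitive_element \<rho>" and npos: "n > 0"
    and N_def: "N = card (UNIV :: 'f set) - 1"
    and ndvd: "2 * n dvd N"
begin

lemma Npos: "N > 0" using card_ge2[where 'f='f] N_def by linarith

lemma rho_nz: "\<rho> \<noteq> 0" using prim by (simp add: primitive_element_def)

lemma rho_N: "\<rho> ^ N = 1" using pow_card_minus1[OF rho_nz] N_def by simp

lemma rho_pow_mod: "\<rho> ^ k = \<rho> ^ (k mod N)"
proof -
  have "\<rho> ^ k = \<rho> ^ (N * (k div N) + k mod N)" by simp
  also have "\<dots> = \<rho> ^ (k mod N)" by (simp only: power_add power_mult rho_N) simp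
  finally show ?thesis .
qed

lemma rho_inj: "inj_on (\<lambda>k. \<rho> ^ k) {..<N}"
proof (rule eq_card_imp_inj_on)
  have "(\<lambda>k. \<rho> ^ k) ` {..<N} = UNIV - {0}"
  proof
    show "(\<lambda>k. \<rho> ^ k) ` {..<N} \<subseteq> UNIV - {0}" using rho_nz by auto
    show "UNIV - {0} \<subseteq> (\<lambda>k. \<rho> ^ k) ` {..<N}"
    proof
      fix x assume "x \<in> (UNIV::'f set) - {0}"
      then obtain k::nat where "x = \<rho> ^ k" using prim unfolding primitive_element_def by auto
      hence "x = \<rho> ^ (k mod N)" using rho_pow_mod by simp
      moreover have "k mod N < N" using Npos by simp
      ultimately show "x \<in> (\<lambda>k. \<rho> ^ k) ` {..<N}" by blast
    qed
  qed
  thus "card ((\<lambda>k. \<rho> ^ k) ` {..<N}) = card {..<N}" by (simp add: card_Diff_subset N_def)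
qed simp

lemma rho_eq: "\<rho> ^ i = \<rho> ^ j \<longleftrightarrow> i mod N = j mod N"
proof
  assume "\<rho> ^ i = \<rho> ^ j"
  hence "\<rho> ^ (i mod N) = \<rho> ^ (j mod N)" using rho_pow_mod by metis
  thus "i mod N = j mod N" using inj_onD[OF rho_inj] Npos by simp
next
  assume "i mod N = j mod N" thus "\<rho> ^ i = \<rho> ^ j" using rho_pow_mod by metis
qed

lemma N_even: "even N" using ndvd by (metis dvd_mult_left even_numeral dvd_trans)

lemma rho_half: "\<rho> ^ (N div 2) = -1"
proof -
  let ?x = "\<rho> ^ (N div 2)"
  have "N div 2 + N div 2 = N" using N_even by auto
  hence "?x * ?x = 1" using rho_N by (metis power_add)
  hence "(?x - 1) * (?x + 1) = 0" by (simp add: algebra_simps)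
  moreover have "?x \<noteq> 1"
  proof
    assume "?x = 1"
    hence "\<rho> ^ (N div 2) = \<rho> ^ 0" by simp
    hence "(N div 2) mod N = 0 mod N" using rho_eq[of "N div 2" 0] by (simp del: power_0)
    thus False using Npos N_even by auto
  qed
  ultimately show ?thesis by (simp add: eq_neg_iff_add_eq_0)
qed

lemma n_dvd_N: "n dvd N" using ndvd by (metis dvd_mult_right)

definition D :: "nat \<Rightarrow> 'f set" where "D i = {\<rho> ^ k | k. k mod n = i mod n}"

lemma D_pow: "\<rho> ^ k \<in> D i \<longleftrightarrow> k mod n = i mod n"
proof
  assume "\<rho> ^ k \<in> D i"
  then obtain k' where "\<rho> ^ k = \<rho> ^ k'" "k' mod n = i mod n" unfolding D_def by auto
  hence "k mod N = k' mod N" using rho_eq by simp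
  hence "k mod N mod n = k' mod N mod n" by simp
  thus "k mod n = i mod n" using n_dvd_N \<open>k' mod n = i mod n\<close> by (simp add: mod_mod_cancel)
qed (auto simp: D_def)

lemma D_nz: "0 \<notin> D i" using rho_nz unfolding D_def by auto

lemma D_cong: "i mod n = j mod n \<Longrightarrow> D i = D j" unfolding D_def by simp

lemma D_mul: "z \<in> D i \<Longrightarrow> \<rho> ^ k * z \<in> D (i + k)"
  unfolding D_def by (auto simp: power_add[symmetric] mod_add_left_eq) (metis add.commute mod_add_left_eq)

lemma D_neg: "z \<in> D i \<Longrightarrow> - z \<in> D i"
proof -
  assume "z \<in> D i"
  hence "\<rho> ^ (N div 2) * z \<in> D (i + N div 2)" by (rule D_mul)
  moreover have "(i + N div 2) mod n = i mod n"
  proof -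
    obtain t where "N = 2 * n * t" using ndvd by auto
    hence "N div 2 = n * t" by simp
    thus ?thesis by simp
  qed
  moreover have "\<rho> ^ (N div 2) * z = - z" using rho_half by simp
  ultimately show "- z \<in> D i" using D_cong by metis
qed


lemma N_eq: "N = card (UNIV :: 'f set) - 1" by (rule N_def)

lemma D_inv: "z \<in> D i \<Longrightarrow> inverse \<rho> * z \<in> D (i + n - 1)"
proof -
  assume z: "z \<in> D i"
  have inv: "inverse \<rho> = \<rho> ^ (N - 1)"
  proof -
    have "\<rho> ^ N = \<rho> * \<rho> ^ (N - 1)" using Npos by (cases N) simp_all
    hence "\<rho> * \<rho> ^ (N - 1) = 1" using rho_N by simp
    thus ?thesis by (rule inverse_unique)
  qed
  have "\<rho> ^ (N - 1) * z \<in> D (i + (N - 1))" using z by (rule D_mul)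
  moreover have "(i + (N - 1)) mod n = (i + n - 1) mod n"
  proof -
    obtain t where t: "N = n * t" using n_dvd_N by auto
    have "t \<ge> 1" using t Npos by (cases t) auto
    then obtain s where "t = Suc s" by (cases t) auto
    hence "N = n + n * s" using t by simp
    hence "i + (N - 1) = (i + n - 1) + n * s" using npos by simp
    thus ?thesis by simp
  qed
  ultimately show ?thesis using inv D_cong by metis
qed

lemma cyc_class_D: "i < n \<Longrightarrow> cyc_class n \<rho> i = D i"
proof -
  assume i: "i < n"
  obtain t where t: "N = 2 * n * t" using ndvd by auto
  have M: "2 * (N div (2 * n)) = N div n" using t npos by simp
  show ?thesis
  proof
    show "cyc_class n \<rho> i \<subseteq> D i"
      unfolding cyc_class_def D_def using i by auto
    show "D i \<subseteq> cyc_class n \<rho> i"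
    proof
      fix x assume "x \<in> D i"
      then obtain k where k: "x = \<rho> ^ k" "k mod n = i mod n" unfolding D_def by auto
      let ?k = "k mod N"
      have x: "x = \<rho> ^ ?k" using k rho_pow_mod by simp
      have "?k mod n = i" using k i n_dvd_N by (simp add: mod_mod_cancel)
      hence e: "?k = n * (?k div n) + i" by (metis mult_div_mod_eq)
      have "?k < N" using Npos by simp
      moreover have "N = (N div n) * n" using n_dvd_N by simp
      ultimately have "?k div n < N div n" by (metis less_mult_imp_div_less)
      thus "x \<in> cyc_class n \<rho> i" unfolding cyc_class_def using x e M N_eq
        by (metis (mono_tags, lifting) mem_Collect_eq)
    qed
  qed
qed

lemma powi_mod: "\<rho> powi j = \<rho> ^ nat (j mod int N)"
proof -
  have "j = j mod int N + int N * (j div int N)" by simp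
  hence "\<rho> powi j = \<rho> powi (j mod int N) * \<rho> powi (int N * (j div int N))"
    using rho_nz by (metis power_int_add)
  also have "\<rho> powi (int N * (j div int N)) = 1"
    by (simp add: power_int_mult rho_N)
  also have "\<rho> powi (j mod int N) = \<rho> ^ nat (j mod int N)"
    using Npos by (metis power_int_of_nat pos_mod_sign of_nat_0_less_iff nat_0_le)
  finally show ?thesis by simp
qed

lemma powi_D: "{\<rho> powi j | j::int. [j = int c] (mod int n)} = D c"
proof
  show "{\<rho> powi j | j::int. [j = int c] (mod int n)} \<subseteq> D c"
  proof
    fix x assume "x \<in> {\<rho> powi j | j::int. [j = int c] (mod int n)}"
    then obtain j where j: "x = \<rho> powi j" "[j = int c] (mod int n)" by auto
    let ?k = "nat (j mod int N)"
    have ik: "int ?k = j mod int N" using Npos by simp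
    have "int (?k mod n) = (j mod int N) mod int n" using ik by (metis of_nat_mod)
    also have "\<dots> = j mod int n" using n_dvd_N by (simp add: mod_mod_cancel)
    also have "\<dots> = int c mod int n" using j(2) by (simp add: cong_def)
    also have "\<dots> = int (c mod n)" by (simp add: of_nat_mod)
    finally have "?k mod n = c mod n" by simp
    thus "x \<in> D c" using j(1) powi_mod D_pow by simp
  qed
  show "D c \<subseteq> {\<rho> powi j | j::int. [j = int c] (mod int n)}"
  proof
    fix x assume "x \<in> D c"
    then obtain k where k: "x = \<rho> ^ k" "k mod n = c mod n" unfolding D_def by auto
    have "x = \<rho> powi int k" using k by simp
    moreover have "[int k = int c] (mod int n)" using k(2)
      by (metis cong_def of_nat_mod)
    ultimately show "x \<in> {\<rho> powi j | j::int. [j = int c] (mod int n)}" by blast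
  qed
qed

end

context cyc begin
lemma count: "card {x. x \<in> D i \<and> x - \<rho> \<in> D j}
   = card ((\<lambda>x. x + 1) ` D (i + n - 1) \<inter> D (j + n - 1))"
proof (rule bij_betw_same_card, rule bij_betw_byWitness[where f' = "\<lambda>w. \<rho> - \<rho> * w"])
  let ?f = "\<lambda>x. 1 - x / \<rho>"
  show "\<forall>a\<in>{x. x \<in> D i \<and> x - \<rho> \<in> D j}. \<rho> - \<rho> * ?f a = a"
    using rho_nz by (intro ballI) (simp add: field_simps)
  show "\<forall>a\<in>(\<lambda>x. x + 1) ` D (i + n - 1) \<inter> D (j + n - 1). ?f (\<rho> - \<rho> * a) = a"
    using rho_nz by (intro ballI) (simp add: field_simps)
  show "?f ` {x. x \<in> D i \<and> x - \<rho> \<in> D j} \<subseteq> (\<lambda>x. x + 1) ` D (i + n - 1) \<inter> D (j + n - 1)"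
  proof (rule image_subsetI)
    fix x assume "x \<in> {x. x \<in> D i \<and> x - \<rho> \<in> D j}"
    hence x: "x \<in> D i" "x - \<rho> \<in> D j" by auto
    have e1: "?f x = - (inverse \<rho> * x) + 1" using rho_nz by (simp add: field_simps)
    have e2: "?f x = - (inverse \<rho> * (x - \<rho>))" using rho_nz by (simp add: field_simps)
    have "- (inverse \<rho> * x) \<in> D (i + n - 1)" using x(1) D_inv D_neg by blast
    hence "?f x \<in> (\<lambda>x. x + 1) ` D (i + n - 1)" using e1 by blast
    moreover have "?f x \<in> D (j + n - 1)" using e2 x(2) D_inv D_neg by metis
    ultimately show "?f x \<in> (\<lambda>x. x + 1) ` D (i + n - 1) \<inter> D (j + n - 1)" by blast
  qed
  show "(\<lambda>w. \<rho> - \<rho> * w) ` ((\<lambda>x. x + 1) ` D (i + n - 1) \<inter> D (j + n - 1)) \<subseteq> {x. x \<in> D i \<and> x - \<rho> \<in> D j}"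
  proof (rule image_subsetI)
    fix w assume "w \<in> (\<lambda>x. x + 1) ` D (i + n - 1) \<inter> D (j + n - 1)"
    then obtain y where y: "y \<in> D (i + n - 1)" "y + 1 \<in> D (j + n - 1)" and wy: "w = y + 1" by auto
    have m1: "(i + n - 1 + 1) mod n = i mod n" using npos by simp
    have m2: "(j + n - 1 + 1) mod n = j mod n" using npos by simp
    have "\<rho> ^ 1 * y \<in> D (i + n - 1 + 1)" using y(1) by (rule D_mul)
    hence "- (\<rho> * y) \<in> D i" using D_neg D_cong[OF m1] by simp
    moreover have "\<rho> - \<rho> * (y + 1) = - (\<rho> * y)" by (simp add: algebra_simps)
    moreover have "\<rho> ^ 1 * (y + 1) \<in> D (j + n - 1 + 1)" using y(2) by (rule D_mul)
    hence "- (\<rho> * (y + 1)) \<in> D j" using D_neg D_cong[OF m2] by simp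
    moreover have "\<rho> - \<rho> * (y + 1) - \<rho> = - (\<rho> * (y + 1))" by (simp add: algebra_simps)
    ultimately show "\<rho> - \<rho> * w \<in> {x. x \<in> D i \<and> x - \<rho> \<in> D j}" using wy by simp
  qed
qed

end


lemma z2add_zero[simp]: "z2add z z2zero = z" by (simp add: z2add_def z2zero_def)
lemma z2add_eq_zero: "z2add z g = z2zero \<longleftrightarrow> z = g" by (auto simp: z2add_def z2zero_def fun_eq_iff)
lemma z2add_invol[simp]: "z2add (z2add h g) g = h" by (auto simp: z2add_def fun_eq_iff)
lemma z2add_Z: "z \<in> Z2m m \<Longrightarrow> g \<in> Z2m m \<Longrightarrow> z2add z g \<in> Z2m m" by (auto simp: z2add_def Z2m_def)
lemma z2zero_Z: "z2zero \<in> Z2m m" by (simp add: z2zero_def Z2m_def)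

theorem proposition2p4:
  fixes l m n :: nat and \<pi> :: "(nat \<Rightarrow> bool) \<Rightarrow> nat" and \<rho> :: "'f::{field,finite}"
    and g :: "nat \<Rightarrow> bool"
  assumes "l > 0" and "m > 0" and "n = 2 ^ m - 1"
    and "bij_betw \<pi> (Z2m m - {z2zero}) {..<n}"
    and "[card (UNIV :: 'f set) = 1] (mod 2 * n)"
    and "primitive_element \<rho>"
    and "g \<in> Z2m m" and "g \<noteq> z2zero" and "\<pi> g \<noteq> 1 mod n"
  shows "card (common_neighbours l m (Spi l m n \<pi> \<rho>) (0, z2zero, 0) (0, g, \<rho>))
    = 2 + (\<Sum>h \<in> Z2m m - {z2zero, g}.
             cyc_num n \<rho> (\<pi> h + n - 1) (\<pi> (z2add h g) + n - 1))"
proof -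
  note lpos = assms(1) and bij = assms(4) and gZ = assms(7) and gnz = assms(8) and pig = assms(9)
  have npos: "n > 0"
  proof -
    have "(2::nat) ^ m \<ge> 2 ^ 1" using assms(2) by (intro power_increasing) auto
    thus ?thesis using assms(3) by simp
  qed
  have ndvd: "2 * n dvd (card (UNIV :: 'f set) - 1)" using assms(5) by (rule cong_to_1_nat)
  interpret C: cyc \<rho> n "card (UNIV :: 'f set) - 1"
    using assms(6) npos ndvd by unfold_locales auto
  let ?Z = "Z2m m" let ?Zs = "Z2m m - {z2zero}" let ?H = "Z2m m - {z2zero, g}"
  let ?S = "Spi l m n \<pi> \<rho>"
  have inj: "inj_on \<pi> ?Zs" using bij by (rule bij_betw_imp_inj_on)
  have finZs: "finite ?Zs" using bij bij_betw_finite by blast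
  have "1 mod n \<in> \<pi> ` ?Zs" using bij_betw_imp_surj_on[OF bij] npos by simp
  then obtain h0 where h0: "h0 \<in> ?Zs" "\<pi> h0 = 1 mod n" by (metis imageE)
  have h0g: "h0 \<noteq> g" using h0 pig by auto
  have piZ: "\<And>z. z \<in> ?Zs \<Longrightarrow> \<pi> z < n" using bij_betw_imp_surj_on[OF bij] by auto
  have rhoD: "\<And>i. \<rho> \<in> C.D i \<longleftrightarrow> 1 mod n = i mod n" using C.D_pow[of 1] by simp
  have to_h0: "\<And>z. z \<in> ?Zs \<Longrightarrow> \<rho> \<in> C.D (\<pi> z) \<Longrightarrow> z = h0"
  proof -
    fix z assume z: "z \<in> ?Zs" "\<rho> \<in> C.D (\<pi> z)"
    hence "\<pi> z = 1 mod n" using rhoD piZ by simp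
    thus "z = h0" using inj z h0 by (metis inj_onD)
  qed
  have to_h0': "\<And>z. z \<in> ?Zs \<Longrightarrow> - \<rho> \<in> C.D (\<pi> z) \<Longrightarrow> z = h0"
    using to_h0 C.D_neg by fastforce
  have Szpi_eq: "\<And>z. Szpi n \<pi> \<rho> z = (\<lambda>y. (0, z, y)) ` C.D (\<pi> z)"
  proof -
    fix z
    have "Szpi n \<pi> \<rho> z = (\<lambda>y. (0, z, y)) ` {\<rho> powi j | j::int. [j = int (\<pi> z)] (mod int n)}"
      unfolding Szpi_def by auto
    thus "Szpi n \<pi> \<rho> z = (\<lambda>y. (0, z, y)) ` C.D (\<pi> z)" using C.powi_D by simp
  qed
  have memS: "\<And>a z x. (a, z, x) \<in> ?S \<longleftrightarrow>
      (x = 0 \<and> 0 \<le> a \<and> a < int l \<and> z \<in> ?Z \<and> (a, z) \<noteq> (0, z2zero)) \<or>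
      (a = 0 \<and> z \<in> ?Zs \<and> x \<in> C.D (\<pi> z))"
    unfolding Spi_def S0_def Szpi_eq by auto
  have v0G: "(0, z2zero, 0) \<in> (Gset l m :: (int \<times> (nat \<Rightarrow> bool) \<times> 'f) set)"
    using lpos z2zero_Z by (simp add: Gset_def)
  have w0G: "(0, g, \<rho>) \<in> (Gset l m :: (int \<times> (nat \<Rightarrow> bool) \<times> 'f) set)"
    using lpos gZ by (simp add: Gset_def)
  have memCN: "\<And>a z x. (a, z, x) \<in> common_neighbours l m ?S (0, z2zero, 0) (0, g, \<rho>) \<longleftrightarrow>
      0 \<le> a \<and> a < int l \<and> z \<in> ?Z \<and> (a, z, x) \<in> ?S \<and> (a, z2add z g, x - \<rho>) \<in> ?S"
  proof -
    fix a z x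
    show "?thesis a z x"
    proof (cases "0 \<le> a \<and> a < int l")
      case True
      hence "a mod int l = a" by simp
      thus ?thesis using v0G w0G True
        unfolding common_neighbours_def cay_adj_def gsub_def by (auto simp: Gset_def)
    qed (auto simp: common_neighbours_def Gset_def)
  qed
  define T where "T h = {x. x \<in> C.D (\<pi> h) \<and> x - \<rho> \<in> C.D (\<pi> (z2add h g))}" for h
  let ?U = "\<Union>h\<in>?H. (\<lambda>x. (0::int, h, x)) ` T h"
  have CN: "common_neighbours l m ?S (0, z2zero, 0) (0, g, \<rho>)
     = insert (0, z2add h0 g, 0) (insert (0, h0, \<rho>) ?U)"
  proof (rule set_eqI)
    fix u :: "int \<times> (nat \<Rightarrow> bool) \<times> 'f"
    obtain a z x where u: "u = (a, z, x)" by (cases u) auto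
    show "u \<in> common_neighbours l m ?S (0, z2zero, 0) (0, g, \<rho>) \<longleftrightarrow> u \<in> insert (0, z2add h0 g, 0) (insert (0, h0, \<rho>) ?U)"
    proof
      assume "u \<in> common_neighbours l m ?S (0, z2zero, 0) (0, g, \<rho>)"
      hence A: "0 \<le> a" "a < int l" "z \<in> ?Z" and s1: "(a, z, x) \<in> ?S"
        and s2: "(a, z2add z g, x - \<rho>) \<in> ?S" using memCN u by auto
      show "u \<in> insert (0, z2add h0 g, 0) (insert (0, h0, \<rho>) ?U)"
      proof (cases "x = 0 \<and> 0 \<le> a \<and> a < int l \<and> z \<in> ?Z \<and> (a, z) \<noteq> (0, z2zero)")
        case True
        hence "a = 0 \<and> z2add z g \<in> ?Zs \<and> - \<rho> \<in> C.D (\<pi> (z2add z g))"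
          using s2 memS C.rho_nz by auto
        hence "z2add z g = h0" "a = 0" using to_h0' by auto
        hence "z = z2add h0 g" "a = 0" by (metis z2add_invol)+
        thus ?thesis using u True by simp
      next
        case False
        hence B: "a = 0" "z \<in> ?Zs" "x \<in> C.D (\<pi> z)" using s1 memS by auto
        show ?thesis
        proof (cases "x = \<rho>")
          case True
          hence "z = h0" using B to_h0 by simp
          thus ?thesis using u B True by simp
        next
          case False
          hence "z2add z g \<in> ?Zs \<and> x - \<rho> \<in> C.D (\<pi> (z2add z g))" using s2 memS by auto
          hence "z \<noteq> g" "x - \<rho> \<in> C.D (\<pi> (z2add z g))" using z2add_eq_zero by auto
          hence "z \<in> ?H" "x \<in> T z" using B T_def by auto
          thus ?thesis using u B by blast
        qed
      qed
    next
      assume R: "u \<in> insert (0, z2add h0 g, 0) (insert (0, h0, \<rho>) ?U)"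
      have h0Z: "h0 \<in> ?Z" "h0 \<noteq> z2zero" using h0 by auto
      have mD: "\<rho> \<in> C.D (\<pi> h0)" "- \<rho> \<in> C.D (\<pi> h0)" using rhoD h0 C.D_neg by auto
      have e: "z2add h0 g \<noteq> z2zero" using h0g z2add_eq_zero by auto
      consider "u = (0, z2add h0 g, 0)" | "u = (0, h0, \<rho>)" | "u \<in> ?U" using R by blast
      thus "u \<in> common_neighbours l m ?S (0, z2zero, 0) (0, g, \<rho>)"
      proof cases
        case 1
        thus ?thesis using memCN memS lpos z2add_Z[OF _ gZ] h0Z e mD by auto
      next
        case 2
        thus ?thesis using memCN memS lpos z2add_Z[OF _ gZ] h0Z h0g e mD by (auto simp: z2add_eq_zero)
      next
        case 3
        then obtain h y where hy: "h \<in> ?H" "y \<in> T h" "u = (0, h, y)" by blast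
        have "z2add h g \<noteq> z2zero" using hy z2add_eq_zero by auto
        thus ?thesis using hy memCN memS lpos z2add_Z[OF _ gZ] T_def by auto
      qed
    qed
  qed
  have finH: "finite ?H" using finZs by (rule finite_subset[rotated]) auto
  have finU: "finite ?U" using finH by simp
  have notU1: "(0, z2add h0 g, 0) \<notin> ?U" using C.D_nz T_def by auto
  have notU2: "(0, h0, \<rho>) \<notin> ?U" using C.D_nz T_def by auto
  have ne: "(0::int, z2add h0 g, 0::'f) \<noteq> (0, h0, \<rho>)" using C.rho_nz by auto
  have cardU: "card ?U = (\<Sum>h\<in>?H. card (T h))"
  proof -
    have "card ?U = (\<Sum>h\<in>?H. card ((\<lambda>x. (0::int, h, x)) ` T h))"
      by (rule card_UN_disjoint) (use finH in auto)
    also have "\<dots> = (\<Sum>h\<in>?H. card (T h))"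
      by (rule sum.cong) (auto simp: card_image inj_on_def)
    finally show ?thesis .
  qed
  have cardT: "\<And>h. h \<in> ?H \<Longrightarrow> card (T h) = cyc_num n \<rho> (\<pi> h + n - 1) (\<pi> (z2add h g) + n - 1)"
  proof -
    fix h assume h: "h \<in> ?H"
    have "card (T h) = card ((\<lambda>x. x + 1) ` C.D (\<pi> h + n - 1) \<inter> C.D (\<pi> (z2add h g) + n - 1))"
      unfolding T_def by (rule C.count)
    also have "\<dots> = cyc_num n \<rho> (\<pi> h + n - 1) (\<pi> (z2add h g) + n - 1)"
    proof -
      have e: "cyc_class n \<rho> (k mod n) = C.D k" for k
        using C.cyc_class_D[of "k mod n"] C.D_cong[of "k mod n" k] npos by simp
      show ?thesis unfolding cyc_num_def e ..
    qed
    finally show "card (T h) = cyc_num n \<rho> (\<pi> h + n - 1) (\<pi> (z2add h g) + n - 1)" .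
  qed
  have "card (insert (0, z2add h0 g, 0) (insert (0, h0, \<rho>) ?U)) = Suc (Suc (card ?U))"
    using notU1 notU2 ne finU by (simp add: card_insert_disjoint)
  moreover have "(\<Sum>h\<in>?H. card (T h)) = (\<Sum>h \<in> ?H. cyc_num n \<rho> (\<pi> h + n - 1) (\<pi> (z2add h g) + n - 1))"
    by (rule sum.cong) (simp_all only: cardT)
  ultimately show ?thesis unfolding CN cardU by simp
qed

end
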